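(* Let $p\in\mathbb{R}[x_1,\ldots,x_n]_{2e}$ be a globally nonnegative homogeneous polynomial of degree $2e$ which is not a square, and let $h=y^2-p(x)$ where $y$ is a variable of degree $e$. If $h^r=\det(y\cdot I-A)$ for some $r\geq1$ and some real symmetric (resp. complex hermitian) matrix $A$ of size $2r$ whose entries are homogeneous polynomials of degree $e$ in $x_1,\ldots,x_n$, then $p$ is a sum of $2r$ squares in the symmetric case and a sum of $4r-1$ squares in the hermitian case. *)

theory Defs
  imports Complex_Main "Jordan_Normal_Form.Determinant"
begin

text \<open>Multivariate polynomials in the real variables x_0,...,x_(n-1) are represented
  by the polynomial functions they induce on points x :: nat => real (only the first
  n coordinates matter). Over the infinite field R this representation is faithful.\<close>

definition exps_hom :: "nat \<Rightarrow> nat \<Rightarrow> (nat \<Rightarrow> nat) set" where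
  "exps_hom n d = {\<alpha>. (\<forall>i\<ge>n. \<alpha> i = 0) \<and> (\<Sum>i<n. \<alpha> i) = d}"

definition exps_le :: "nat \<Rightarrow> nat \<Rightarrow> (nat \<Rightarrow> nat) set" where
  "exps_le n d = {\<alpha>. (\<forall>i\<ge>n. \<alpha> i = 0) \<and> (\<Sum>i<n. \<alpha> i) \<le> d}"

definition monom :: "nat \<Rightarrow> (nat \<Rightarrow> nat) \<Rightarrow> (nat \<Rightarrow> real) \<Rightarrow> 'a::{real_algebra_1,comm_ring_1}" where
  "monom n \<alpha> x = (\<Prod>i<n. of_real (x i) ^ \<alpha> i)"

definition hom_form :: "nat \<Rightarrow> nat \<Rightarrow> ((nat \<Rightarrow> real) \<Rightarrow> 'a::{real_algebra_1,comm_ring_1}) \<Rightarrow> bool" where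
  "hom_form n d f \<longleftrightarrow> (\<exists>c. \<forall>x. f x = (\<Sum>\<alpha>\<in>exps_hom n d. c \<alpha> * monom n \<alpha> x))"

definition is_poly :: "nat \<Rightarrow> ((nat \<Rightarrow> real) \<Rightarrow> 'a::{real_algebra_1,comm_ring_1}) \<Rightarrow> bool" where
  "is_poly n f \<longleftrightarrow> (\<exists>d c. \<forall>x. f x = (\<Sum>\<alpha>\<in>exps_le n d. c \<alpha> * monom n \<alpha> x))"

definition sum_of_squares :: "nat \<Rightarrow> nat \<Rightarrow> ((nat \<Rightarrow> real) \<Rightarrow> real) \<Rightarrow> bool" where
  "sum_of_squares n k p \<longleftrightarrow>
     (\<exists>q. (\<forall>i<k. is_poly n (q i)) \<and> (\<forall>x. p x = (\<Sum>i<k. (q i x)\<^sup>2)))"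

definition char_mat :: "nat \<Rightarrow> 'a \<Rightarrow> (nat \<Rightarrow> nat \<Rightarrow> (nat \<Rightarrow> real) \<Rightarrow> 'a::comm_ring_1)
      \<Rightarrow> (nat \<Rightarrow> real) \<Rightarrow> 'a mat" where
  "char_mat m y A x = mat m m (\<lambda>(i,j). (if i = j then y else 0) - A i j x)"

end

theory Submission
  imports Defs "Jordan_Normal_Form.Jordan_Normal_Form_Uniqueness" "Jordan_Normal_Form.Schur_Decomposition"
begin


lemma mult_entry:
  assumes "X \<in> carrier_mat n n" "Y \<in> carrier_mat n n" "i < n" "j < n"
  shows "(X*Y)$$(i,j) = (\<Sum>k<n. X$$(i,k) * Y$$(k,j))"
  using assms by (simp add: scalar_prod_def atLeast0LessThan)

lemma tr_comm:
  fixes X Y :: "'a::comm_ring_1 mat"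
  assumes X: "X \<in> carrier_mat n n" and Y: "Y \<in> carrier_mat n n"
  shows "(\<Sum>i<n. (X*Y)$$(i,i)) = (\<Sum>i<n. (Y*X)$$(i,i))"
proof -
  have "(\<Sum>i<n. (X*Y)$$(i,i)) = (\<Sum>i<n. \<Sum>k<n. X$$(i,k) * Y$$(k,i))"
    using mult_entry[OF X Y] by simp
  also have "\<dots> = (\<Sum>k<n. \<Sum>i<n. Y$$(k,i) * X$$(i,k))"
    by (subst sum.swap) (simp add: mult.commute[of "X$$(_,_)"])
  also have "\<dots> = (\<Sum>i<n. (Y*X)$$(i,i))"
    using mult_entry[OF Y X] by simp
  finally show ?thesis .
qed

lemma upper_sq_diag:
  fixes N :: "'a::comm_ring_1 mat"
  assumes N: "N \<in> carrier_mat n n" and low: "\<And>i j. i < n \<Longrightarrow> j < n \<Longrightarrow> j < i \<Longrightarrow> N$$(i,j) = 0"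
    and i: "i < n"
  shows "(N*N)$$(i,i) = N$$(i,i) * N$$(i,i)"
proof -
  have "(N*N)$$(i,i) = (\<Sum>k<n. N$$(i,k) * N$$(k,i))" using mult_entry[OF N N i i] .
  also have "\<dots> = (\<Sum>k<n. if k = i then N$$(i,i) * N$$(i,i) else 0)"
  proof (rule sum.cong[OF refl])
    fix k assume k: "k \<in> {..<n}"
    show "N$$(i,k) * N$$(k,i) = (if k = i then N$$(i,i) * N$$(i,i) else 0)"
      using low[of i k] low[of k i] k i by (cases "k < i"; cases "k = i") auto
  qed
  also have "\<dots> = N$$(i,i) * N$$(i,i)" using i by simp
  finally show ?thesis .
qed

lemma upper_sq_low:
  fixes N :: "'a::comm_ring_1 mat"
  assumes N: "N \<in> carrier_mat n n" and low: "\<And>i j. i < n \<Longrightarrow> j < n \<Longrightarrow> j < i \<Longrightarrow> N$$(i,j) = 0"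
    and i: "i < n" and j: "j < n" and ji: "j < i"
  shows "(N*N)$$(i,j) = 0"
proof -
  have "(N*N)$$(i,j) = (\<Sum>k<n. N$$(i,k) * N$$(k,j))" using mult_entry[OF N N i j] .
  also have "\<dots> = 0"
  proof (rule sum.neutral, rule ballI)
    fix k assume k: "k \<in> {..<n}"
    show "N$$(i,k) * N$$(k,j) = 0"
      using low[of i k] low[of k j] k i j ji by (cases "k < i") auto
  qed
  finally show ?thesis .
qed

lemma herm_sq:
  fixes A :: "complex mat" and c :: real
  assumes A: "A \<in> carrier_mat n n"
    and herm: "\<forall>i<n. \<forall>j<n. A$$(j,i) = cnj (A$$(i,j))"
    and cp: "char_poly A = (\<Prod>e\<leftarrow>es. [:-e,1:])"
    and es: "\<forall>e\<in>set es. e*e = of_real c"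
  shows "\<forall>i<n. \<forall>j<n. (A*A)$$(i,j) = (if i=j then of_real c else 0)"
proof -
  obtain B P Q where sch: "schur_decomposition A es = (B,P,Q)" by (cases "schur_decomposition A es") auto
  from schur_decomposition[OF A cp sch] have sim: "similar_mat_wit A B P Q"
    and ut: "upper_triangular B" and dg: "diag_mat B = es" by auto
  note W = similar_mat_witD2[OF A sim]
  have B: "B \<in> carrier_mat n n" and P: "P \<in> carrier_mat n n" and Q: "Q \<in> carrier_mat n n"
    and QP: "Q * P = 1\<^sub>m n" using W by auto
  have pw: "X ^\<^sub>m 2 = X * X" if "X \<in> carrier_mat n n" for X :: "complex mat"
    using that by (simp add: numeral_2_eq_2)
  have sim2: "similar_mat_wit (A*A) (B*B) P Q"
    using similar_mat_wit_pow[OF sim, of 2] pw[OF A] pw[OF B] by simp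
  define C where "C = char_matrix (A*A) (of_real c)"
  define N where "N = char_matrix (B*B) (of_real c)"
  have sim3: "similar_mat_wit C N P Q" unfolding C_def N_def
    by (rule similar_mat_wit_char_matrix[OF sim2])
  have C: "C \<in> carrier_mat n n" and N: "N \<in> carrier_mat n n"
    using A B unfolding C_def N_def by auto
  have sim4: "similar_mat_wit (C*C) (N*N) P Q"
    using similar_mat_wit_pow[OF sim3, of 2] pw[OF C] pw[OF N] by simp
  have CC: "C*C = P * (N*N) * Q" using similar_mat_witD2[OF _ sim4, of n n] C by auto
  have NN: "N*N \<in> carrier_mat n n" using N by auto
  have "(\<Sum>i<n. (C*C)$$(i,i)) = (\<Sum>i<n. (P * ((N*N) * Q))$$(i,i))"
    unfolding CC using P NN Q by simp
  also have "\<dots> = (\<Sum>i<n. (((N*N) * Q) * P)$$(i,i))"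
    by (rule tr_comm) (use P NN Q in auto)
  also have "((N*N) * Q) * P = N*N" using NN Q P QP by (simp add: right_mult_one_mat[OF NN])
  finally have trC: "(\<Sum>i<n. (C*C)$$(i,i)) = (\<Sum>i<n. (N*N)$$(i,i))" .
  have Nent: "N$$(i,j) = (B*B)$$(i,j) - (if i = j then of_real c else 0)" if "i<n" "j<n" for i j
    using that B unfolding N_def char_matrix_def by simp
  have Blow: "B$$(i,j) = 0" if "i<n" "j<n" "j<i" for i j
    using ut that B unfolding upper_triangular_def by auto
  have Bdiag: "B$$(i,i) * B$$(i,i) = of_real c" if "i<n" for i
  proof -
    have "B$$(i,i) \<in> set es" using dg that B unfolding diag_mat_def by auto
    thus ?thesis using es by auto
  qed
  have Nlow: "N$$(i,j) = 0" if "i<n" "j<n" "j<i" for i j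
    using Nent[OF that(1,2)] upper_sq_low[OF B Blow that] that by simp
  have Ndiag: "N$$(i,i) = 0" if "i<n" for i
    using Nent[OF that that] upper_sq_diag[OF B Blow that] Bdiag[OF that] by simp
  have "(\<Sum>i<n. (N*N)$$(i,i)) = 0"
    using upper_sq_diag[OF N Nlow] Ndiag by simp
  with trC have tr0: "(\<Sum>i<n. (C*C)$$(i,i)) = 0" by simp
  have Cent: "C$$(i,j) = (A*A)$$(i,j) - (if i = j then of_real c else 0)" if "i<n" "j<n" for i j
    using that A unfolding C_def char_matrix_def by simp
  have Cherm: "C$$(j,i) = cnj (C$$(i,j))" if "i<n" "j<n" for i j
  proof -
    have "cnj ((A*A)$$(i,j)) = (\<Sum>k<n. cnj (A$$(i,k)) * cnj (A$$(k,j)))"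
      using mult_entry[OF A A that] by simp
    also have "\<dots> = (\<Sum>k<n. A$$(j,k) * A$$(k,i))"
    proof (rule sum.cong[OF refl])
      fix k assume "k \<in> {..<n}"
      hence "k < n" by simp
      hence "cnj (A$$(i,k)) = A$$(k,i)" "cnj (A$$(k,j)) = A$$(j,k)"
        using herm that by (metis complex_cnj_cnj)+
      thus "cnj (A$$(i,k)) * cnj (A$$(k,j)) = A$$(j,k) * A$$(k,i)" by simp
    qed
    also have "\<dots> = (A*A)$$(j,i)" using mult_entry[OF A A that(2,1)] by simp
    finally show ?thesis using Cent that by auto
  qed
  have "(\<Sum>i<n. (C*C)$$(i,i)) = (\<Sum>i<n. \<Sum>k<n. complex_of_real ((cmod (C$$(i,k)))\<^sup>2))"
  proof (rule sum.cong[OF refl])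
    fix i assume i: "i \<in> {..<n}"
    have "(C*C)$$(i,i) = (\<Sum>k<n. C$$(i,k) * C$$(k,i))" using mult_entry[OF C C, of i i] i by simp
    also have "\<dots> = (\<Sum>k<n. complex_of_real ((cmod (C$$(i,k)))\<^sup>2))"
    proof (rule sum.cong[OF refl])
      fix k assume "k \<in> {..<n}"
      hence "C$$(k,i) = cnj (C$$(i,k))" using Cherm[of i k] i by simp
      thus "C$$(i,k) * C$$(k,i) = complex_of_real ((cmod (C$$(i,k)))\<^sup>2)"
        by (simp only: complex_norm_square)
    qed
    finally show "(C*C)$$(i,i) = (\<Sum>k<n. complex_of_real ((cmod (C$$(i,k)))\<^sup>2))" .
  qed
  with tr0 have "complex_of_real (\<Sum>i<n. \<Sum>k<n. (cmod (C$$(i,k)))\<^sup>2) = 0"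
    by (simp only: of_real_sum)
  hence "(\<Sum>i<n. \<Sum>k<n. (cmod (C$$(i,k)))\<^sup>2) = 0" by (simp only: of_real_eq_0_iff)
  hence "\<forall>i\<in>{..<n}. (\<Sum>k<n. (cmod (C$$(i,k)))\<^sup>2) = 0"
    by (subst (asm) sum_nonneg_eq_0_iff) (auto intro: sum_nonneg)
  hence C0: "C$$(i,k) = 0" if "i<n" "k<n" for i k
    using that by (auto simp: sum_nonneg_eq_0_iff)
  show ?thesis
  proof (intro allI impI)
    fix i j assume ij: "i < n" "j < n"
    show "(A*A)$$(i,j) = (if i=j then of_real c else 0)"
    proof -
      have "(A*A)$$(i,j) - (if i=j then of_real c else 0) = 0"
        using C0[OF ij] Cent[OF ij] by argo
      thus ?thesis by (simp only: right_minus_eq)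
    qed
  qed
qed



lemma finite_exps_le: "finite (exps_le n d)"
proof -
  have "exps_le n d \<subseteq> {f. \<forall>x. (x \<in> {..<n} \<longrightarrow> f x \<in> {..d}) \<and> (x \<notin> {..<n} \<longrightarrow> f x = 0)}"
  proof
    fix \<alpha> assume a: "\<alpha> \<in> exps_le n d"
    have "\<alpha> x \<le> d" if "x < n" for x
    proof -
      have "\<alpha> x \<le> (\<Sum>i<n. \<alpha> i)" using that by (intro member_le_sum) auto
      thus ?thesis using a unfolding exps_le_def by auto
    qed
    thus "\<alpha> \<in> {f. \<forall>x. (x \<in> {..<n} \<longrightarrow> f x \<in> {..d}) \<and> (x \<notin> {..<n} \<longrightarrow> f x = 0)}"
      using a unfolding exps_le_def by auto
  qed
  thus ?thesis by (rule finite_subset) (intro finite_set_of_finite_funs; simp)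
qed

lemma exps_hom_le: "exps_hom n d \<subseteq> exps_le n d"
  unfolding exps_hom_def exps_le_def by auto

lemma is_poly_of_hom:
  fixes f :: "(nat \<Rightarrow> real) \<Rightarrow> real"
  assumes "\<forall>x. f x = (\<Sum>\<alpha>\<in>exps_hom n e. c \<alpha> * monom n \<alpha> x)"
  shows "is_poly n f"
  unfolding is_poly_def
proof (intro exI allI)
  fix x
  have "(\<Sum>\<alpha>\<in>exps_le n e. (if \<alpha> \<in> exps_hom n e then c \<alpha> else 0) * (monom n \<alpha> x :: real))
     = (\<Sum>\<alpha>\<in>exps_hom n e. (if \<alpha> \<in> exps_hom n e then c \<alpha> else 0) * monom n \<alpha> x)"
    by (rule sum.mono_neutral_right[OF finite_exps_le exps_hom_le]) auto
  also have "\<dots> = f x" using assms by simp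
  finally show "f x = (\<Sum>\<alpha>\<in>exps_le n e. (if \<alpha> \<in> exps_hom n e then c \<alpha> else 0) * monom n \<alpha> x)"
    by simp
qed

lemma is_poly_real: "hom_form n e (f :: (nat \<Rightarrow> real) \<Rightarrow> real) \<Longrightarrow> is_poly n f"
  unfolding hom_form_def using is_poly_of_hom by blast

lemma monom_complex: "(monom n \<alpha> x :: complex) = complex_of_real (monom n \<alpha> x)"
  unfolding monom_def by simp

lemma is_poly_Re: "hom_form n e (f :: (nat \<Rightarrow> real) \<Rightarrow> complex) \<Longrightarrow> is_poly n (\<lambda>x. Re (f x))"
proof -
  assume "hom_form n e f"
  then obtain c where c: "\<forall>x. f x = (\<Sum>\<alpha>\<in>exps_hom n e. c \<alpha> * monom n \<alpha> x)"
    unfolding hom_form_def by blast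
  show ?thesis
    by (rule is_poly_of_hom[where c="\<lambda>\<alpha>. Re (c \<alpha>)" and e=e]) (simp add: c monom_complex Re_sum)
qed

lemma is_poly_Im: "hom_form n e (f :: (nat \<Rightarrow> real) \<Rightarrow> complex) \<Longrightarrow> is_poly n (\<lambda>x. Im (f x))"
proof -
  assume "hom_form n e f"
  then obtain c where c: "\<forall>x. f x = (\<Sum>\<alpha>\<in>exps_hom n e. c \<alpha> * monom n \<alpha> x)"
    unfolding hom_form_def by blast
  show ?thesis
    by (rule is_poly_of_hom[where c="\<lambda>\<alpha>. Im (c \<alpha>)" and e=e]) (simp add: c monom_complex Im_sum)
qed

lemma poly_eq_on_reals:
  fixes p q :: "complex poly"
  assumes "\<forall>y::real. poly p (of_real y) = poly q (of_real y)"
  shows "p = q"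
proof (rule ccontr)
  assume "p \<noteq> q"
  hence "p - q \<noteq> 0" by simp
  hence fin: "finite {z. poly (p - q) z = 0}" by (rule poly_roots_finite)
  have "range (of_real :: real \<Rightarrow> complex) \<subseteq> {z. poly (p - q) z = 0}"
    using assms by auto
  hence "finite (range (of_real :: real \<Rightarrow> complex))" using fin finite_subset by blast
  moreover have "inj (of_real :: real \<Rightarrow> complex)" by (simp add: inj_on_def)
  ultimately have "finite (UNIV :: real set)" using finite_imageD by blast
  thus False using infinite_UNIV_char_0 by blast
qed

lemma factor_poly:
  fixes s :: complex
  shows "[:-(s*s),0,1:]^r = (\<Prod>e\<leftarrow>replicate r s @ replicate r (-s). [:-e,1:])"
proof -
  have "[:-(s*s),0,1:] = [:-s,1:] * [:s,1:]" by simp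
  hence "[:-(s*s),0,1:]^r = ([:-s,1:] * [:s,1:])^r" by (simp only:)
  also have "\<dots> = [:-s,1:]^r * [:s,1:]^r" by (rule power_mult_distrib)
  finally have "[:-(s*s),0,1:]^r = [:-s,1:]^r * [:s,1:]^r" .
  thus ?thesis by (simp add: prod_list_replicate)
qed

lemma sq_from_det:
  fixes M :: "complex mat" and P :: real
  assumes M: "M \<in> carrier_mat m m"
    and herm: "\<forall>i<m. \<forall>j<m. M$$(j,i) = cnj (M$$(i,j))"
    and P: "P \<ge> 0"
    and dt: "\<forall>y::real. det (- (char_matrix M (of_real y))) = of_real ((y\<^sup>2 - P)^r)"
  shows "\<forall>i<m. \<forall>j<m. (M*M)$$(i,j) = (if i=j then of_real P else 0)"
proof -
  define s where "s = complex_of_real (sqrt P)"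
  have ss: "s * s = of_real P"
  proof -
    have "sqrt P * sqrt P = P" using P by simp
    hence "complex_of_real (sqrt P * sqrt P) = of_real P" by simp
    thus ?thesis unfolding s_def by (simp only: of_real_mult)
  qed
  have "char_poly M = [:-(s*s),0,1:]^r"
  proof (rule poly_eq_on_reals, rule allI)
    fix y :: real
    show "poly (char_poly M) (of_real y) = poly ([:-(s*s),0,1:]^r) (of_real y)"
      unfolding char_poly_matrix[OF M] dt[rule_format] ss by (simp add: power2_eq_square)
  qed
  hence cp: "char_poly M = (\<Prod>e\<leftarrow>replicate r s @ replicate r (-s). [:-e,1:])"
    by (simp add: factor_poly)
  show ?thesis
    by (rule herm_sq[OF M herm cp]) (auto simp: ss)
qed


lemma pair_sum:
  fixes a b :: "nat \<Rightarrow> real"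
  shows "(\<Sum>i<2*k+1. (if i=0 then a 0 else if odd i then a ((i+1) div 2) else b (i div 2)))
         = a 0 + (\<Sum>j<k. a (Suc j) + b (Suc j))"
proof (induction k)
  case 0
  then show ?case by simp
next
  case (Suc k)
  have e: "2 * Suc k + 1 = Suc (Suc (2*k+1))" by simp
  have o: "odd (2*k+1)" by simp
  have "(2*k+1+1) div 2 = Suc k" by simp
  moreover have "Suc (2*k+1) div 2 = Suc k" by simp
  ultimately show ?case unfolding e sum.lessThan_Suc Suc.IH using o by simp
qed

lemma sum_split0:
  fixes f :: "nat \<Rightarrow> real"
  shows "(\<Sum>k<Suc K. f k) = f 0 + (\<Sum>j<K. f (Suc j))"
  by (induction K) auto

lemma neg_char_real:
  "- (char_matrix (mat m m (\<lambda>(i,j). complex_of_real (A i j x))) (complex_of_real y))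
   = map_mat complex_of_real (char_mat m y A x)"
  by (rule eq_matI) (auto simp: char_matrix_def char_mat_def)

lemma neg_char_cplx:
  "- (char_matrix (mat m m (\<lambda>(i,j). A i j x)) (complex_of_real y))
   = char_mat m (complex_of_real y) A x"
  by (rule eq_matI) (auto simp: char_matrix_def char_mat_def)

theorem lemma9p4:
  fixes n e :: nat and p :: "(nat \<Rightarrow> real) \<Rightarrow> real"
  assumes form: "hom_form n (2 * e) p"
    and nonneg: "\<forall>x. p x \<ge> 0"
    and not_square: "\<not> (\<exists>q :: (nat \<Rightarrow> real) \<Rightarrow> real. is_poly n q \<and> (\<forall>x. p x = (q x)\<^sup>2))"
  shows
    "(\<forall>(r::nat) (A :: nat \<Rightarrow> nat \<Rightarrow> (nat \<Rightarrow> real) \<Rightarrow> real).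
        r \<ge> 1
        \<and> (\<forall>i<2*r. \<forall>j<2*r. hom_form n e (A i j) \<and> A i j = A j i)
        \<and> (\<forall>x y. (y\<^sup>2 - p x) ^ r = det (char_mat (2*r) y A x))
        \<longrightarrow> sum_of_squares n (2*r) p)
     \<and>
     (\<forall>(r::nat) (A :: nat \<Rightarrow> nat \<Rightarrow> (nat \<Rightarrow> real) \<Rightarrow> complex).
        r \<ge> 1
        \<and> (\<forall>i<2*r. \<forall>j<2*r. hom_form n e (A i j) \<and> (\<forall>x. A j i x = cnj (A i j x)))
        \<and> (\<forall>x y. complex_of_real ((y\<^sup>2 - p x) ^ r) = det (char_mat (2*r) (complex_of_real y) A x))
        \<longrightarrow> sum_of_squares n (4*r - 1) p)"
proof (intro conjI allI impI)
  fix r :: nat and A :: "nat \<Rightarrow> nat \<Rightarrow> (nat \<Rightarrow> real) \<Rightarrow> real"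
  assume h: "r \<ge> 1
        \<and> (\<forall>i<2*r. \<forall>j<2*r. hom_form n e (A i j) \<and> A i j = A j i)
        \<and> (\<forall>x y. (y\<^sup>2 - p x) ^ r = det (char_mat (2*r) y A x))"
  define m where "m = 2*r"
  have m0: "0 < m" using h unfolding m_def by simp
  have hf: "\<And>i j. i < m \<Longrightarrow> j < m \<Longrightarrow> hom_form n e (A i j)"
   and sy: "\<And>i j. i < m \<Longrightarrow> j < m \<Longrightarrow> A i j = A j i"
    using h unfolding m_def by auto
  have dh: "\<And>x y. (y\<^sup>2 - p x) ^ r = det (char_mat m y A x)" using h unfolding m_def by auto
  have key: "p x = (\<Sum>k<m. (A 0 k x)\<^sup>2)" for x
  proof -
    define M where "M = mat m m (\<lambda>(i,j). complex_of_real (A i j x))"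
    have M: "M \<in> carrier_mat m m" unfolding M_def by simp
    have herm: "\<forall>i<m. \<forall>j<m. M$$(j,i) = cnj (M$$(i,j))"
      unfolding M_def using sy by simp
    have dt: "\<forall>y::real. det (- (char_matrix M (of_real y))) = of_real ((y\<^sup>2 - p x)^r)"
      unfolding M_def neg_char_real of_real_hom.hom_det dh by simp
    have "(M*M)$$(0,0) = of_real (p x)"
      using sq_from_det[OF M herm nonneg[rule_format] dt] m0 by simp
    moreover have "(M*M)$$(0,0) = (\<Sum>k<m. complex_of_real ((A 0 k x)\<^sup>2))"
      unfolding mult_entry[OF M M m0 m0]
    proof (rule sum.cong[OF refl])
      fix k assume "k \<in> {..<m}"
      thus "M $$ (0, k) * M $$ (k, 0) = complex_of_real ((A 0 k x)\<^sup>2)"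
        unfolding M_def using sy[of k 0] m0 by (simp add: power2_eq_square)
    qed
    ultimately have "complex_of_real (p x) = complex_of_real (\<Sum>k<m. (A 0 k x)\<^sup>2)"
      by (simp only: of_real_sum)
    thus ?thesis by (simp only: of_real_eq_iff)
  qed
  show "sum_of_squares n (2*r) p"
    unfolding sum_of_squares_def m_def[symmetric]
  proof (rule exI[of _ "\<lambda>i. A 0 i"], intro conjI allI impI)
    fix i assume "i < m"
    thus "is_poly n (A 0 i)" using is_poly_real[OF hf[of 0 i]] m0 by simp
  next
    fix x show "p x = (\<Sum>i<m. (A 0 i x)\<^sup>2)" by (rule key)
  qed
next
  fix r :: nat and A :: "nat \<Rightarrow> nat \<Rightarrow> (nat \<Rightarrow> real) \<Rightarrow> complex"
  assume h: "r \<ge> 1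
        \<and> (\<forall>i<2*r. \<forall>j<2*r. hom_form n e (A i j) \<and> (\<forall>x. A j i x = cnj (A i j x)))
        \<and> (\<forall>x y. complex_of_real ((y\<^sup>2 - p x) ^ r) = det (char_mat (2*r) (complex_of_real y) A x))"
  define m where "m = 2*r"
  have m0: "0 < m" using h unfolding m_def by simp
  have hf: "\<And>i j. i < m \<Longrightarrow> j < m \<Longrightarrow> hom_form n e (A i j)"
   and hh: "\<And>i j x. i < m \<Longrightarrow> j < m \<Longrightarrow> A j i x = cnj (A i j x)"
    using h unfolding m_def by blast+
  have dh: "\<And>x y. complex_of_real ((y\<^sup>2 - p x) ^ r) = det (char_mat m (complex_of_real y) A x)"
    using h unfolding m_def by auto
  have key: "p x = (\<Sum>k<m. (Re (A 0 k x))\<^sup>2 + (Im (A 0 k x))\<^sup>2)" for x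
  proof -
    define M where "M = mat m m (\<lambda>(i,j). A i j x)"
    have M: "M \<in> carrier_mat m m" unfolding M_def by simp
    have herm: "\<forall>i<m. \<forall>j<m. M$$(j,i) = cnj (M$$(i,j))"
    proof (intro allI impI)
      fix i j assume "i < m" "j < m"
      thus "M$$(j,i) = cnj (M$$(i,j))" unfolding M_def using hh[of i j x] by simp
    qed
    have dt: "\<forall>y::real. det (- (char_matrix M (of_real y))) = of_real ((y\<^sup>2 - p x)^r)"
      unfolding M_def neg_char_cplx dh by simp
    have "(M*M)$$(0,0) = of_real (p x)"
      using sq_from_det[OF M herm nonneg[rule_format] dt] m0 by simp
    moreover have "(M*M)$$(0,0) = (\<Sum>k<m. complex_of_real ((Re (A 0 k x))\<^sup>2 + (Im (A 0 k x))\<^sup>2))"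
      unfolding mult_entry[OF M M m0 m0]
    proof (rule sum.cong[OF refl])
      fix k assume "k \<in> {..<m}"
      hence "M $$ (0, k) * M $$ (k, 0) = A 0 k x * cnj (A 0 k x)"
        unfolding M_def using hh[of 0 k x] m0 by simp
      also have "\<dots> = complex_of_real ((cmod (A 0 k x))\<^sup>2)" by (simp only: complex_norm_square)
      also have "(cmod (A 0 k x))\<^sup>2 = (Re (A 0 k x))\<^sup>2 + (Im (A 0 k x))\<^sup>2" by (rule cmod_power2)
      finally show "M $$ (0, k) * M $$ (k, 0) = complex_of_real ((Re (A 0 k x))\<^sup>2 + (Im (A 0 k x))\<^sup>2)" .
    qed
    ultimately have "complex_of_real (p x) = complex_of_real (\<Sum>k<m. (Re (A 0 k x))\<^sup>2 + (Im (A 0 k x))\<^sup>2)"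
      by (simp only: of_real_sum)
    thus ?thesis by (simp only: of_real_eq_iff)
  qed
  define q where "q = (\<lambda>i x. if i=0 then Re (A 0 0 x) else if odd i then Re (A 0 ((i+1) div 2) x) else Im (A 0 (i div 2) x))"
  obtain K where K: "m = Suc K" using m0 by (cases m) auto
  have idx: "4*r - 1 = 2*K+1" using K unfolding m_def by simp
  have im0: "Im (A 0 0 x) = 0" for x
  proof -
    have e: "A 0 0 x = cnj (A 0 0 x)" using hh[of 0 0 x] m0 by blast
    have "Im (A 0 0 x) = Im (cnj (A 0 0 x))" by (rule arg_cong[OF e])
    hence "Im (A 0 0 x) = - Im (A 0 0 x)" by (simp only: cnj.sel)
    thus ?thesis by linarith
  qed
  have sq: "p x = (\<Sum>i<4*r-1. (q i x)\<^sup>2)" for x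
  proof -
    have "(\<Sum>i<4*r-1. (q i x)\<^sup>2) = (\<Sum>i<2*K+1. (if i=0 then (Re (A 0 0 x))\<^sup>2 else if odd i then (Re (A 0 ((i+1) div 2) x))\<^sup>2 else (Im (A 0 (i div 2) x))\<^sup>2))"
      unfolding idx q_def by (rule sum.cong) auto
    also have "\<dots> = (Re (A 0 0 x))\<^sup>2 + (\<Sum>j<K. (Re (A 0 (Suc j) x))\<^sup>2 + (Im (A 0 (Suc j) x))\<^sup>2)"
      by (rule pair_sum[where a="\<lambda>j. (Re (A 0 j x))\<^sup>2" and b="\<lambda>j. (Im (A 0 j x))\<^sup>2"])
    also have "\<dots> = (\<Sum>k<m. (Re (A 0 k x))\<^sup>2 + (Im (A 0 k x))\<^sup>2)"
      unfolding K sum_split0 using im0[of x] by simp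
    finally show ?thesis using key by simp
  qed
  have qp: "is_poly n (q i)" if "i < 4*r-1" for i
  proof (cases "i = 0")
    case True
    then show ?thesis unfolding q_def using is_poly_Re[OF hf[of 0 0]] m0 by simp
  next
    case False
    show ?thesis
    proof (cases "odd i")
      case True
      have "(i+1) div 2 < m" using that unfolding m_def by simp
      then show ?thesis unfolding q_def using is_poly_Re[OF hf[of 0 "(i+1) div 2"]] m0 True False by simp
    next
      case ev: False
      have "i div 2 < m" using that unfolding m_def by simp
      then show ?thesis unfolding q_def using is_poly_Im[OF hf[of 0 "i div 2"]] m0 ev False by simp
    qed
  qed
  show "sum_of_squares n (4*r-1) p"
    unfolding sum_of_squares_def using qp sq by blast
qed

end
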